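(* Let $(G,+)$ be an abelian group with identity $0$. Let $M=(E,\mathcal{I})$ and $N=(E',\mathcal{I}')$ be two transversal matroids over $G$ with partitions $\{E_i\}_{i\in[n]}$ of $E$ and $\{E'_i\}_{i\in[n]}$ of $E'$, respectively, such that $|E_i|=|E'_i|$ for all $i$. Assume there exists a total order $\preceq$ on $E\cup E'\cup(E+E')\cup\{0\}$ compatible with the group structure of $G$ such that: (1) there exists $k\in[n]$ such that (a) $E_i$ and $E'_i$ are negative when $i<k$ and positive otherwise; (b) $E_k=-E'_k=\{-a: a\in E'_k\}$; (c) $|E_i|>|E_j|$ whenever $k<i<j$ or $j<i<k$; (2) for all $i<j$, $E_i\prec E_j$ and $E'_i\prec E'_j$; (3) $\max E\preceq \max E'$ and $\min E'\preceq \min E$. Then $M$ is matched to $N$. Furthermore, if $k=1$ then the condition $\min E'\preceq\min E$ can be removed, and if $k=n$ then the condition $\max E\preceq \max E'$ can be removed.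
   Context: Given a partition of a finite set $E$ into disjoint sets $E_1,\dots,E_l$, the transversal matroid on $E$ has as independent sets those $X\subseteq E$ with $|X\cap E_i|\le 1$ for all $i$. A matroid over $G$ is a matroid whose finite ground set is a subset of $G$. $E+E'=\{a+b: a\in E, b\in E'\}$. A total order $\preceq$ on $A\subseteq G$ is compatible with the group structure if for all $a,b,c\in A$, $a\preceq b$ implies $a+c\preceq b+c$. An element $x$ is positive if $0\prec x$ and negative if $x\prec 0$; a set is positive (negative) if all its elements are. For sets $A,B$, $A\prec B$ means $a\prec b$ for all $a\in A$, $b\in B$ (where $\prec$ means $\preceq$ and $\ne$). For matroids $M,N$ over $G$ with $r(M)=r(N)=n>0$ and bases $\mathcal{M}=\{a_1,\dots,a_n\}$ of $M$ and $\mathcal{N}=\{b_1,\dots,b_n\}$ of $N$, $\mathcal{M}$ is matched to $\mathcal{N}$ if there is a permutation $\pi\in S_n$ with $a_i+b_{\pi(i)}\notin E(M)$ for all $i$. $M$ is matched to $N$ if for every basis $\mathcal{M}$ of $M$ there exists a basis $\mathcal{N}$ of $N$ such that $\mathcal{M}$ is matched to $\mathcal{N}$. *)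

theory Defs
  imports Main
begin

definition tm_ground :: "nat \<Rightarrow> (nat \<Rightarrow> 'a set) \<Rightarrow> 'a set" where
  "tm_ground n P = (\<Union>i\<in>{1..n}. P i)"

definition tm_indep :: "nat \<Rightarrow> (nat \<Rightarrow> 'a set) \<Rightarrow> 'a set \<Rightarrow> bool" where
  "tm_indep n P X \<longleftrightarrow> X \<subseteq> tm_ground n P \<and> (\<forall>i\<in>{1..n}. card (X \<inter> P i) \<le> 1)"

definition tm_basis :: "nat \<Rightarrow> (nat \<Rightarrow> 'a set) \<Rightarrow> 'a set \<Rightarrow> bool" where
  "tm_basis n P B \<longleftrightarrow> tm_indep n P B \<and> (\<forall>Y. tm_indep n P Y \<and> B \<subseteq> Y \<longrightarrow> Y = B)"

definition tm_rank :: "nat \<Rightarrow> (nat \<Rightarrow> 'a set) \<Rightarrow> nat" where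
  "tm_rank n P = Max (card ` {X. tm_indep n P X})"

definition tm_matched ::
  "nat \<Rightarrow> (nat \<Rightarrow> 'a::ab_group_add set) \<Rightarrow> nat \<Rightarrow> (nat \<Rightarrow> 'a set) \<Rightarrow> bool" where
  "tm_matched n P m Q \<longleftrightarrow>
     tm_rank n P = tm_rank m Q \<and> tm_rank n P > 0 \<and>
     (\<forall>B. tm_basis n P B \<longrightarrow>
        (\<exists>B' f. tm_basis m Q B' \<and> bij_betw f B B' \<and>
                (\<forall>a\<in>B. a + f a \<notin> tm_ground n P)))"

definition sumset :: "'a::ab_group_add set \<Rightarrow> 'a set \<Rightarrow> 'a set" where
  "sumset A B = {a + b | a b. a \<in> A \<and> b \<in> B}"

text \<open>le is a total order on the set A (the relation le lives on the whole group,
  only its restriction to A is required to be a total order).\<close>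
definition total_order_on :: "'a set \<Rightarrow> ('a \<Rightarrow> 'a \<Rightarrow> bool) \<Rightarrow> bool" where
  "total_order_on A le \<longleftrightarrow>
     (\<forall>x\<in>A. le x x) \<and>
     (\<forall>x\<in>A. \<forall>y\<in>A. le x y \<and> le y x \<longrightarrow> x = y) \<and>
     (\<forall>x\<in>A. \<forall>y\<in>A. \<forall>z\<in>A. le x y \<and> le y z \<longrightarrow> le x z) \<and>
     (\<forall>x\<in>A. \<forall>y\<in>A. le x y \<or> le y x)"

definition compatible_on :: "'a::ab_group_add set \<Rightarrow> ('a \<Rightarrow> 'a \<Rightarrow> bool) \<Rightarrow> bool" where
  "compatible_on A le \<longleftrightarrow> (\<forall>a\<in>A. \<forall>b\<in>A. \<forall>c\<in>A. le a b \<longrightarrow> le (a + c) (b + c))"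

definition strict :: "('a \<Rightarrow> 'a \<Rightarrow> bool) \<Rightarrow> 'a \<Rightarrow> 'a \<Rightarrow> bool" where
  "strict le a b \<longleftrightarrow> le a b \<and> a \<noteq> b"

definition positive_set :: "('a::ab_group_add \<Rightarrow> 'a \<Rightarrow> bool) \<Rightarrow> 'a set \<Rightarrow> bool" where
  "positive_set le X \<longleftrightarrow> (\<forall>x\<in>X. strict le 0 x)"

definition negative_set :: "('a::ab_group_add \<Rightarrow> 'a \<Rightarrow> bool) \<Rightarrow> 'a set \<Rightarrow> bool" where
  "negative_set le X \<longleftrightarrow> (\<forall>x\<in>X. strict le x 0)"

definition set_less :: "('a \<Rightarrow> 'a \<Rightarrow> bool) \<Rightarrow> 'a set \<Rightarrow> 'a set \<Rightarrow> bool" where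
  "set_less le X Y \<longleftrightarrow> (\<forall>a\<in>X. \<forall>b\<in>Y. strict le a b)"

definition ord_max :: "('a \<Rightarrow> 'a \<Rightarrow> bool) \<Rightarrow> 'a set \<Rightarrow> 'a" where
  "ord_max le S = (THE m. m \<in> S \<and> (\<forall>x\<in>S. le x m))"

definition ord_min :: "('a \<Rightarrow> 'a \<Rightarrow> bool) \<Rightarrow> 'a set \<Rightarrow> 'a" where
  "ord_min le S = (THE m. m \<in> S \<and> (\<forall>x\<in>S. le m x))"

end

theory Submission imports Defs begin

lemma sum_small_le:
  fixes s :: "nat \<Rightarrow> nat"
  assumes finA: "finite A" and JA: "J \<subseteq> A" and TA: "T \<subseteq> A" and cTJ: "card T \<le> card J"
    and mon: "\<forall>t\<in>T. \<forall>y\<in>A-T. s t \<le> s y"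
  shows "sum s T \<le> sum s J"
proof -
  have fJ: "finite J" and fT: "finite T" using finA JA TA finite_subset by auto
  have c1: "card T = card (T \<inter> J) + card (T - J)"
    by (metis Int_commute card_Int_Diff fT)
  have c2: "card J = card (T \<inter> J) + card (J - T)"
    by (metis Int_commute card_Int_Diff fJ)
  have cc: "card (T - J) \<le> card (J - T)" using c1 c2 cTJ by linarith
  have s1: "sum s T = sum s (T \<inter> J) + sum s (T - J)"
    by (metis Int_commute fT sum.Int_Diff)
  have s2: "sum s J = sum s (T \<inter> J) + sum s (J - T)"
    by (metis Int_commute fJ sum.Int_Diff)
  show ?thesis
  proof (cases "T - J = {}")
    case True
    then have z: "sum s (T - J) = 0" by (metis sum.empty)
    then show ?thesis using s1 s2 z by linarith
  next
    case False
    define M where "M = Max (s ` (T - J))"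
    have fTJ: "finite (T - J)" using fT by simp
    have "M \<in> s ` (T - J)" unfolding M_def using False fTJ by simp
    then obtain t where t: "t \<in> T - J" "s t = M" by auto
    have a1: "sum s (T - J) \<le> of_nat (card (T - J)) * M"
      by (rule sum_bounded_above) (simp add: M_def fTJ)
    have a2: "of_nat (card (J - T)) * M \<le> sum s (J - T)"
    proof (rule sum_bounded_below)
      fix y assume "y \<in> J - T"
      then have "y \<in> A - T" using JA by auto
      then show "M \<le> s y" using mon t by auto
    qed
    have m: "card (T - J) * M \<le> card (J - T) * M" using cc by (rule mult_right_mono) simp
    have a1': "sum s (T - J) \<le> card (T - J) * M" using a1 by simp
    have a2': "card (J - T) * M \<le> sum s (J - T)" using a2 by simp
    show ?thesis using a1' a2' s1 s2 m by linarith
  qed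
qed

lemma arith_aux1: "k < i \<Longrightarrow> i \<le> (n::nat) \<Longrightarrow> c \<le> n - i \<Longrightarrow> i - k \<le> n - k - c" by arith

lemma arith_aux2: "1 \<le> i \<Longrightarrow> i < (k::nat) \<Longrightarrow> c \<le> i - 1 \<Longrightarrow> k - i \<le> (k - 1) - c" by arith

lemma greedy:
  assumes finC: "finite C"
    and deg: "\<forall>r\<in>{1..m}. r \<le> card {j\<in>C. A r j}"
  shows "\<exists>\<sigma>. inj_on \<sigma> {1..m} \<and> (\<forall>r\<in>{1..m}. \<sigma> r \<in> C \<and> A r (\<sigma> r))"
  using deg
proof (induction m)
  case 0
  then show ?case by auto
next
  case (Suc m)
  then obtain \<sigma> where s: "inj_on \<sigma> {1..m}" "\<forall>r\<in>{1..m}. \<sigma> r \<in> C \<and> A r (\<sigma> r)"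
    by auto
  have d: "Suc m \<le> card {j\<in>C. A (Suc m) j}" using Suc.prems by auto
  have cs: "card (\<sigma> ` {1..m}) = m" using s(1) by (simp add: card_image)
  have "\<not> {j\<in>C. A (Suc m) j} \<subseteq> \<sigma> ` {1..m}"
  proof
    assume "{j\<in>C. A (Suc m) j} \<subseteq> \<sigma> ` {1..m}"
    then have "card {j\<in>C. A (Suc m) j} \<le> card (\<sigma> ` {1..m})"
      by (intro card_mono) auto
    then show False using d cs by simp
  qed
  then obtain j where j: "j \<in> C" "A (Suc m) j" "j \<notin> \<sigma> ` {1..m}" by auto
  define \<tau> where "\<tau> = \<sigma>(Suc m := j)"
  have "inj_on \<tau> {1..Suc m}"
  proof -
    have e: "{1..Suc m} = insert (Suc m) {1..m}" by auto
    have eq: "\<And>r. r \<in> {1..m} \<Longrightarrow> \<tau> r = \<sigma> r" unfolding \<tau>_def by auto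
    have "inj_on \<tau> {1..m} = inj_on \<sigma> {1..m}" by (rule inj_on_cong) (rule eq)
    then have "inj_on \<tau> {1..m}" using s(1) by simp
    moreover have "\<tau> ` {1..m} = \<sigma> ` {1..m}" using eq by (rule image_cong[OF refl])
    moreover have "\<tau> (Suc m) = j" unfolding \<tau>_def by simp
    ultimately have "inj_on \<tau> {1..m}" "\<tau> (Suc m) \<notin> \<tau> ` {1..m}" using j(3) by auto
    then show ?thesis unfolding e by simp
  qed
  moreover have "\<forall>r\<in>{1..Suc m}. \<tau> r \<in> C \<and> A r (\<tau> r)"
  proof
    fix r assume r: "r \<in> {1..Suc m}"
    show "\<tau> r \<in> C \<and> A r (\<tau> r)"
    proof (cases "r = Suc m")
      case True then show ?thesis using j unfolding \<tau>_def by simp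
    next
      case False then have "r \<in> {1..m}" using r by auto
      then show ?thesis using s(2) False unfolding \<tau>_def by simp
    qed
  qed
  ultimately show ?case by blast
qed

lemma basis_char:
  assumes fin: "\<forall>i\<in>{1..n}. finite (P i) \<and> P i \<noteq> {}"
    and disj: "\<forall>i\<in>{1..n}. \<forall>j\<in>{1..n}. i \<noteq> j \<longrightarrow> P i \<inter> P j = {}"
  shows "tm_basis n P B \<longleftrightarrow> B \<subseteq> tm_ground n P \<and> (\<forall>i\<in>{1..n}. card (B \<inter> P i) = 1)"
proof
  assume b: "tm_basis n P B"
  then have ind: "tm_indep n P B" and mx: "\<forall>Y. tm_indep n P Y \<and> B \<subseteq> Y \<longrightarrow> Y = B"
    unfolding tm_basis_def by auto
  have sub: "B \<subseteq> tm_ground n P" and le1: "\<forall>i\<in>{1..n}. card (B \<inter> P i) \<le> 1"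
    using ind unfolding tm_indep_def by auto
  have "card (B \<inter> P i) = 1" if i: "i \<in> {1..n}" for i
  proof (rule ccontr)
    assume "card (B \<inter> P i) \<noteq> 1"
    then have c0: "card (B \<inter> P i) = 0" using le1 i by force
    have "finite (B \<inter> P i)" using fin i by auto
    then have e: "B \<inter> P i = {}" using c0 by simp
    have "P i \<noteq> {}" using fin i by blast
    then obtain x where x: "x \<in> P i" by blast
    have "tm_indep n P (insert x B)"
      unfolding tm_indep_def
    proof (intro conjI ballI)
      show "insert x B \<subseteq> tm_ground n P" using sub x i unfolding tm_ground_def by auto
    next
      fix j assume j: "j \<in> {1..n}"
      show "card (insert x B \<inter> P j) \<le> 1"
      proof (cases "j = i")
        case True
        then have "insert x B \<inter> P j = {x}" using e x by auto
        then show ?thesis by simp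
      next
        case False
        then have "P i \<inter> P j = {}" using disj i j by auto
        then have "x \<notin> P j" using x by auto
        then have "insert x B \<inter> P j = B \<inter> P j" by auto
        then show ?thesis using le1 j by simp
      qed
    qed
    then have "insert x B = B" using mx by auto
    then show False using e x by auto
  qed
  then show "B \<subseteq> tm_ground n P \<and> (\<forall>i\<in>{1..n}. card (B \<inter> P i) = 1)" using sub by auto
next
  assume a: "B \<subseteq> tm_ground n P \<and> (\<forall>i\<in>{1..n}. card (B \<inter> P i) = 1)"
  have ind: "tm_indep n P B" using a unfolding tm_indep_def by auto
  have "Y = B" if Y: "tm_indep n P Y" "B \<subseteq> Y" for Y
  proof
    show "Y \<subseteq> B"
    proof
      fix y assume y: "y \<in> Y"
      then obtain i where i: "i \<in> {1..n}" "y \<in> P i"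
        using Y(1) unfolding tm_indep_def tm_ground_def by auto
      have "card (B \<inter> P i) = 1" using a i by blast
      then obtain z where z: "B \<inter> P i = {z}" by (auto simp: card_1_singleton_iff)
      have fin2: "finite (Y \<inter> P i)" using fin i by auto
      have c: "card (Y \<inter> P i) \<le> 1" using Y(1) i unfolding tm_indep_def by auto
      have "{y, z} \<subseteq> Y \<inter> P i" using y i z Y(2) by auto
      then have "card {y, z} \<le> card (Y \<inter> P i)" using fin2 by (rule card_mono[rotated])
      then have "card {y, z} \<le> 1" using c by linarith
      then have "y = z" by (cases "y = z") auto
      then show "y \<in> B" using z by auto
    qed
  qed (use Y in auto)
  then show "tm_basis n P B" using ind unfolding tm_basis_def by auto
qed

lemma rank_n:
  assumes fin: "\<forall>i\<in>{1..n}. finite (P i) \<and> P i \<noteq> {}"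
    and disj: "\<forall>i\<in>{1..n}. \<forall>j\<in>{1..n}. i \<noteq> j \<longrightarrow> P i \<inter> P j = {}"
  shows "tm_rank n P = n"
proof -
  have le: "card X \<le> n" if X: "tm_indep n P X" for X
  proof -
    have "X = (\<Union>i\<in>{1..n}. X \<inter> P i)" using X unfolding tm_indep_def tm_ground_def by auto
    then have "card X \<le> (\<Sum>i\<in>{1..n}. card (X \<inter> P i))" by (metis card_UN_le finite_atLeastAtMost)
    also have "\<dots> \<le> (\<Sum>i\<in>{1..n}. 1)" using X unfolding tm_indep_def by (intro sum_mono) auto
    finally show ?thesis by simp
  qed
  define c where "c i = (SOME x. x \<in> P i)" for i
  have c: "c i \<in> P i" if "i \<in> {1..n}" for i using fin that unfolding c_def by (metis some_in_eq)
  define X where "X = c ` {1..n}"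
  have XP: "X \<inter> P j = {c j}" if j: "j \<in> {1..n}" for j
  proof -
    have "c i \<in> P j \<longleftrightarrow> i = j" if "i \<in> {1..n}" for i using c disj that j by blast
    then show ?thesis unfolding X_def using j by auto
  qed
  have inj: "inj_on c {1..n}"
    by (rule inj_onI) (metis IntI c disj empty_iff)
  have cX: "card X = n" unfolding X_def using inj by (simp add: card_image)
  have iX: "tm_indep n P X" unfolding tm_indep_def
    using XP c unfolding X_def tm_ground_def by auto
  have fin_s: "finite (card ` {X. tm_indep n P X})"
    by (rule finite_subset[of _ "{..n}"]) (auto dest: le)
  show ?thesis unfolding tm_rank_def
  proof (rule Max_eqI[OF fin_s])
    fix y assume "y \<in> card ` {X. tm_indep n P X}" then show "y \<le> n" using le by auto
  next
    show "n \<in> card ` {X. tm_indep n P X}" using iX cX by (metis (mono_tags) image_eqI mem_Collect_eq)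
  qed
qed

theorem theorem2p16:
  fixes n k :: nat
    and P Q :: "nat \<Rightarrow> 'a::ab_group_add set"
    and le :: "'a \<Rightarrow> 'a \<Rightarrow> bool"
  assumes part_P: "\<forall>i\<in>{1..n}. finite (P i) \<and> P i \<noteq> {}"
      and disj_P: "\<forall>i\<in>{1..n}. \<forall>j\<in>{1..n}. i \<noteq> j \<longrightarrow> P i \<inter> P j = {}"
      and part_Q: "\<forall>i\<in>{1..n}. finite (Q i) \<and> Q i \<noteq> {}"
      and disj_Q: "\<forall>i\<in>{1..n}. \<forall>j\<in>{1..n}. i \<noteq> j \<longrightarrow> Q i \<inter> Q j = {}"
      and same_card: "\<forall>i\<in>{1..n}. card (P i) = card (Q i)"
      and order: "total_order_on (tm_ground n P \<union> tm_ground n Q \<union>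
                     sumset (tm_ground n P) (tm_ground n Q) \<union> {0}) le"
      and compat: "compatible_on (tm_ground n P \<union> tm_ground n Q \<union>
                     sumset (tm_ground n P) (tm_ground n Q) \<union> {0}) le"
      and k: "k \<in> {1..n}"
      and c1a_neg: "\<forall>i\<in>{1..n}. i < k \<longrightarrow> negative_set le (P i) \<and> negative_set le (Q i)"
      and c1a_pos: "\<forall>i\<in>{1..n}. k < i \<longrightarrow> positive_set le (P i) \<and> positive_set le (Q i)"
      and c1a_k: "positive_set le (P k)"
      and c1b: "P k = uminus ` (Q k)"
      and c1c: "\<forall>i\<in>{1..n}. \<forall>j\<in>{1..n}. (k < i \<and> i < j) \<or> (j < i \<and> i < k)
                   \<longrightarrow> card (P i) > card (P j)"
      and c2: "\<forall>i\<in>{1..n}. \<forall>j\<in>{1..n}. i < j \<longrightarrow>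
                   set_less le (P i) (P j) \<and> set_less le (Q i) (Q j)"
      and c3_max: "k = n \<or> le (ord_max le (tm_ground n P)) (ord_max le (tm_ground n Q))"
      and c3_min: "k = 1 \<or> le (ord_min le (tm_ground n Q)) (ord_min le (tm_ground n P))"
  shows "tm_matched n P n Q"

proof -
  define E where "E = tm_ground n P"
  define S where "S = tm_ground n P \<union> tm_ground n Q \<union> sumset (tm_ground n P) (tm_ground n Q) \<union> {0}"
  have antis: "\<And>x y. x \<in> S \<Longrightarrow> y \<in> S \<Longrightarrow> le x y \<Longrightarrow> le y x \<Longrightarrow> x = y"
    using order unfolding total_order_on_def S_def by blast
  have cmp: "\<And>x y z. x \<in> S \<Longrightarrow> y \<in> S \<Longrightarrow> z \<in> S \<Longrightarrow> le x y \<Longrightarrow> le (x + z) (y + z)"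
    using compat unfolding compatible_on_def S_def by blast
  have PS: "\<And>x i. i \<in> {1..n} \<Longrightarrow> x \<in> P i \<Longrightarrow> x \<in> S"
    unfolding S_def tm_ground_def by blast
  have QS: "\<And>x i. i \<in> {1..n} \<Longrightarrow> x \<in> Q i \<Longrightarrow> x \<in> S"
    unfolding S_def tm_ground_def by blast
  have ES: "\<And>x. x \<in> E \<Longrightarrow> x \<in> S" unfolding S_def E_def by blast
  have PQS: "\<And>x y. x \<in> E \<Longrightarrow> y \<in> tm_ground n Q \<Longrightarrow> x + y \<in> S"
    unfolding S_def E_def sumset_def by blast
  have zS: "0 \<in> S" unfolding S_def by blast
  have memE: "\<And>x. x \<in> E \<longleftrightarrow> (\<exists>i\<in>{1..n}. x \<in> P i)" unfolding E_def tm_ground_def by blast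
  have memQ: "\<And>x i. i \<in> {1..n} \<Longrightarrow> x \<in> Q i \<Longrightarrow> x \<in> tm_ground n Q"
    unfolding tm_ground_def by blast
  have nz: "\<And>x. x \<in> E \<Longrightarrow> x \<noteq> 0"
  proof -
    fix x assume "x \<in> E"
    then obtain i where i: "i \<in> {1..n}" "x \<in> P i" using memE by blast
    consider "i < k" | "i = k" | "k < i" by linarith
    then show "x \<noteq> 0"
    proof cases
      case 1 then show ?thesis using c1a_neg i unfolding negative_set_def strict_def by auto
    next
      case 2 then show ?thesis using c1a_k i unfolding positive_set_def strict_def by auto
    next
      case 3 then show ?thesis using c1a_pos i unfolding positive_set_def strict_def by auto
    qed
  qed
  have finP: "\<And>i. i \<in> {1..n} \<Longrightarrow> finite (P i)" using part_P by blast
  have finQ: "\<And>i. i \<in> {1..n} \<Longrightarrow> finite (Q i)" using part_Q by blast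
  have disjQ: "\<And>i j x. i \<in> {1..n} \<Longrightarrow> j \<in> {1..n} \<Longrightarrow> x \<in> Q i \<Longrightarrow> x \<in> Q j \<Longrightarrow> i = j"
    using disj_Q by blast
  have disjP: "\<And>i j x. i \<in> {1..n} \<Longrightarrow> j \<in> {1..n} \<Longrightarrow> x \<in> P i \<Longrightarrow> x \<in> P j \<Longrightarrow> i = j"
    using disj_P by blast

  have deg_pos: "i - k \<le> card {j\<in>{k+1..n}. \<exists>b\<in>Q j. a + b \<notin> E}"
    if i: "i \<in> {k+1..n}" and a: "a \<in> P i" for i a
  proof -
    define J where "J = {j\<in>{k+1..n}. \<forall>b\<in>Q j. a + b \<in> E}"
    define U where "U = {e\<in>E. strict le a e}"
    have i1: "i \<in> {1..n}" using i k by auto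
    have aS: "a \<in> S" using PS i1 a .
    have aE: "a \<in> E" using memE i1 a by blast
    have U_sub: "U \<subseteq> (P i - {a}) \<union> (\<Union>l\<in>{i+1..n}. P l)"
    proof
      fix e assume e: "e \<in> U"
      then have eE: "e \<in> E" and st: "strict le a e" unfolding U_def by auto
      then obtain l where l: "l \<in> {1..n}" "e \<in> P l" using memE by blast
      have eS: "e \<in> S" using ES eE .
      have "\<not> l < i"
      proof
        assume "l < i"
        then have "set_less le (P l) (P i)" using c2 l i1 by blast
        then have "strict le e a" using l a unfolding set_less_def by blast
        then show False using st antis[OF eS aS] unfolding strict_def by auto
      qed
      then have "l = i \<or> l \<in> {i+1..n}" using l by auto
      then show "e \<in> (P i - {a}) \<union> (\<Union>l\<in>{i+1..n}. P l)"
        using st l unfolding strict_def by auto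
    qed
    have finR: "finite ((P i - {a}) \<union> (\<Union>l\<in>{i+1..n}. P l))"
      using finP i1 i by auto
    have "card U \<le> card ((P i - {a}) \<union> (\<Union>l\<in>{i+1..n}. P l))"
      using card_mono[OF finR U_sub] .
    also have "\<dots> \<le> card (P i - {a}) + card (\<Union>l\<in>{i+1..n}. P l)" by (rule card_Un_le)
    also have "card (\<Union>l\<in>{i+1..n}. P l) \<le> (\<Sum>l\<in>{i+1..n}. card (P l))" by (rule card_UN_le) simp
    finally have cU: "card U \<le> card (P i - {a}) + (\<Sum>l\<in>{i+1..n}. card (P l))" by simp
    have cPa: "card (P i - {a}) = card (P i) - 1" using a finP[OF i1] by simp
    have cP1: "1 \<le> card (P i)" using a finP[OF i1] by (metis One_nat_def Suc_leI card_gt_0_iff empty_iff)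
    have ins: "{i..n} = insert i {i+1..n}" using i by auto
    have sumT: "(\<Sum>l\<in>{i..n}. card (P l)) = card (P i) + (\<Sum>l\<in>{i+1..n}. card (P l))"
      unfolding ins by (subst sum.insert) auto
    have cU2: "card U + 1 \<le> (\<Sum>l\<in>{i..n}. card (P l))" using cU cPa cP1 sumT by linarith
    have img: "(+) a ` (\<Union>j\<in>J. Q j) \<subseteq> U"
    proof
      fix x assume "x \<in> (+) a ` (\<Union>j\<in>J. Q j)"
      then obtain j b where j: "j \<in> J" and b: "b \<in> Q j" and x: "x = a + b" by auto
      have j1: "j \<in> {1..n}" and jk: "k < j" using j k unfolding J_def by auto
      have xE: "a + b \<in> E" using j b unfolding J_def by auto
      have "positive_set le (Q j)" using c1a_pos j1 jk by blast
      then have sb: "strict le 0 b" using b unfolding positive_set_def by blast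
      have bS: "b \<in> S" using QS j1 b .
      have "le (0 + a) (b + a)" using cmp[OF zS bS aS] sb unfolding strict_def by blast
      then have "le a (a + b)" by (simp add: add.commute)
      moreover have "a + b \<noteq> a" using sb unfolding strict_def by auto
      ultimately have "strict le a (a + b)" unfolding strict_def by auto
      then show "x \<in> U" using xE x unfolding U_def by auto
    qed
    have finJ: "finite J" unfolding J_def by auto
    have JQ: "\<forall>j\<in>J. finite (Q j)" using finQ unfolding J_def by auto
    have cJ: "card (\<Union>j\<in>J. Q j) = (\<Sum>j\<in>J. card (Q j))"
      by (rule card_UN_disjoint[OF finJ JQ]) (use disj_Q in \<open>auto simp: J_def\<close>)
    have "card ((+) a ` (\<Union>j\<in>J. Q j)) = card (\<Union>j\<in>J. Q j)" by (rule card_image) simp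
    moreover have "finite U" using finR U_sub finite_subset by blast
    ultimately have "card (\<Union>j\<in>J. Q j) \<le> card U" using card_mono[OF _ img] by metis
    moreover have "(\<Sum>j\<in>J. card (Q j)) = (\<Sum>j\<in>J. card (P j))"
      using same_card by (intro sum.cong) (auto simp: J_def)
    ultimately have sJ: "(\<Sum>j\<in>J. card (P j)) \<le> card U" using cJ by simp
    have cJle: "card J \<le> n - i"
    proof (rule ccontr)
      assume "\<not> card J \<le> n - i"
      then have ct: "card {i..n} \<le> card J" using i by simp
      have "(\<Sum>l\<in>{i..n}. card (P l)) \<le> (\<Sum>j\<in>J. card (P j))"
      proof (rule sum_small_le[of "{k+1..n}"])
        show "\<forall>t\<in>{i..n}. \<forall>y\<in>{k+1..n} - {i..n}. card (P t) \<le> card (P y)"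
        proof (intro ballI)
          fix t y assume t: "t \<in> {i..n}" and y: "y \<in> {k+1..n} - {i..n}"
          then have "t \<in> {1..n}" "y \<in> {1..n}" "k < y" "y < t" using i k by auto
          then show "card (P t) \<le> card (P y)" using c1c by fastforce
        qed
      qed (use ct i in \<open>auto simp: J_def\<close>)
      then show False using sJ cU2 by linarith
    qed
    have eqA: "{j\<in>{k+1..n}. \<exists>b\<in>Q j. a + b \<notin> E} = {k+1..n} - J" by (auto simp: J_def)
    have "card ({k+1..n} - J) = card {k+1..n} - card J"
      by (rule card_Diff_subset) (auto simp: J_def)
    then have "card ({k+1..n} - J) = (n - k) - card J" by simp
    moreover have "i - k \<le> (n - k) - card J"
      by (rule arith_aux1) (use i cJle in auto)
    ultimately show ?thesis unfolding eqA by simp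
  qed

  have deg_neg: "k - i \<le> card {j\<in>{1..k-1}. \<exists>b\<in>Q j. a + b \<notin> E}"
    if i: "i \<in> {1..k-1}" and a: "a \<in> P i" for i a
  proof -
    define J where "J = {j\<in>{1..k-1}. \<forall>b\<in>Q j. a + b \<in> E}"
    define U where "U = {e\<in>E. strict le e a}"
    have i1: "i \<in> {1..n}" using i k by auto
    have aS: "a \<in> S" using PS i1 a .
    have U_sub: "U \<subseteq> (P i - {a}) \<union> (\<Union>l\<in>{1..i-1}. P l)"
    proof
      fix e assume e: "e \<in> U"
      then have eE: "e \<in> E" and st: "strict le e a" unfolding U_def by auto
      then obtain l where l: "l \<in> {1..n}" "e \<in> P l" using memE by blast
      have eS: "e \<in> S" using ES eE .
      have "\<not> i < l"
      proof
        assume "i < l"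
        then have "set_less le (P i) (P l)" using c2 l i1 by blast
        then have "strict le a e" using l a unfolding set_less_def by blast
        then show False using st antis[OF eS aS] unfolding strict_def by auto
      qed
      then have "l = i \<or> l \<in> {1..i-1}" using l by auto
      then show "e \<in> (P i - {a}) \<union> (\<Union>l\<in>{1..i-1}. P l)"
        using st l unfolding strict_def by auto
    qed
    have finR: "finite ((P i - {a}) \<union> (\<Union>l\<in>{1..i-1}. P l))"
      using finP i1 i by auto
    have "card U \<le> card ((P i - {a}) \<union> (\<Union>l\<in>{1..i-1}. P l))"
      using card_mono[OF finR U_sub] .
    also have "\<dots> \<le> card (P i - {a}) + card (\<Union>l\<in>{1..i-1}. P l)" by (rule card_Un_le)
    also have "card (\<Union>l\<in>{1..i-1}. P l) \<le> (\<Sum>l\<in>{1..i-1}. card (P l))" by (rule card_UN_le) simp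
    finally have cU: "card U \<le> card (P i - {a}) + (\<Sum>l\<in>{1..i-1}. card (P l))" by simp
    have cPa: "card (P i - {a}) = card (P i) - 1" using a finP[OF i1] by simp
    have cP1: "1 \<le> card (P i)" using a finP[OF i1] by (metis One_nat_def Suc_leI card_gt_0_iff empty_iff)
    have ins: "{1..i} = insert i {1..i-1}" using i by auto
    have sumT: "(\<Sum>l\<in>{1..i}. card (P l)) = card (P i) + (\<Sum>l\<in>{1..i-1}. card (P l))"
      unfolding ins by (subst sum.insert) auto
    have cU2: "card U + 1 \<le> (\<Sum>l\<in>{1..i}. card (P l))" using cU cPa cP1 sumT by linarith
    have img: "(+) a ` (\<Union>j\<in>J. Q j) \<subseteq> U"
    proof
      fix x assume "x \<in> (+) a ` (\<Union>j\<in>J. Q j)"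
      then obtain j b where j: "j \<in> J" and b: "b \<in> Q j" and x: "x = a + b" by auto
      have j1: "j \<in> {1..n}" and jk: "j < k" using j k unfolding J_def by auto
      have xE: "a + b \<in> E" using j b unfolding J_def by auto
      have "negative_set le (Q j)" using c1a_neg j1 jk by blast
      then have sb: "strict le b 0" using b unfolding negative_set_def by blast
      have bS: "b \<in> S" using QS j1 b .
      have "le (b + a) (0 + a)" using cmp[OF bS zS aS] sb unfolding strict_def by blast
      then have "le (a + b) a" by (simp add: add.commute)
      moreover have "a + b \<noteq> a" using sb unfolding strict_def by auto
      ultimately have "strict le (a + b) a" unfolding strict_def by auto
      then show "x \<in> U" using xE x unfolding U_def by auto
    qed
    have finJ: "finite J" unfolding J_def by auto
    have JQ: "\<forall>j\<in>J. finite (Q j)" using finQ k unfolding J_def by auto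
    have cJ: "card (\<Union>j\<in>J. Q j) = (\<Sum>j\<in>J. card (Q j))"
    proof (rule card_UN_disjoint[OF finJ JQ], intro ballI impI)
      fix i' j' assume ij: "i' \<in> J" "j' \<in> J" "i' \<noteq> j'"
      then have "i' \<in> {1..n}" "j' \<in> {1..n}" using k by (auto simp: J_def)
      then show "Q i' \<inter> Q j' = {}" using disj_Q ij(3) by blast
    qed
    have "card ((+) a ` (\<Union>j\<in>J. Q j)) = card (\<Union>j\<in>J. Q j)" by (rule card_image) simp
    moreover have "finite U" using finR U_sub finite_subset by blast
    ultimately have "card (\<Union>j\<in>J. Q j) \<le> card U" using card_mono[OF _ img] by metis
    moreover have "(\<Sum>j\<in>J. card (Q j)) = (\<Sum>j\<in>J. card (P j))"
      using same_card k by (intro sum.cong) (auto simp: J_def)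
    ultimately have sJ: "(\<Sum>j\<in>J. card (P j)) \<le> card U" using cJ by simp
    have cJle: "card J \<le> i - 1"
    proof (rule ccontr)
      assume "\<not> card J \<le> i - 1"
      then have ct: "card {1..i} \<le> card J" using i by simp
      have "(\<Sum>l\<in>{1..i}. card (P l)) \<le> (\<Sum>j\<in>J. card (P j))"
      proof (rule sum_small_le[of "{1..k-1}"])
        show "\<forall>t\<in>{1..i}. \<forall>y\<in>{1..k-1} - {1..i}. card (P t) \<le> card (P y)"
        proof (intro ballI)
          fix t y assume t: "t \<in> {1..i}" and y: "y \<in> {1..k-1} - {1..i}"
          then have "t \<in> {1..n}" "y \<in> {1..n}" "y < k" "t < y" using i k by auto
          then show "card (P t) \<le> card (P y)" using c1c by fastforce
        qed
      qed (use ct i in \<open>auto simp: J_def\<close>)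
      then show False using sJ cU2 by linarith
    qed
    have eqA: "{j\<in>{1..k-1}. \<exists>b\<in>Q j. a + b \<notin> E} = {1..k-1} - J" by (auto simp: J_def)
    have "card ({1..k-1} - J) = card {1..k-1} - card J"
      by (rule card_Diff_subset) (auto simp: J_def)
    then have "card ({1..k-1} - J) = (k - 1) - card J" by simp
    moreover have "k - i \<le> (k - 1) - card J"
      by (rule arith_aux2) (use i cJle in auto)
    ultimately show ?thesis unfolding eqA by simp
  qed

  have rP: "tm_rank n P = n" by (rule rank_n[OF part_P disj_P])
  have rQ: "tm_rank n Q = n" by (rule rank_n[OF part_Q disj_Q])
  have n0: "0 < n" using k by auto
  have main: "\<exists>B' f. tm_basis n Q B' \<and> bij_betw f B B' \<and> (\<forall>x\<in>B. x + f x \<notin> tm_ground n P)"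
    if B: "tm_basis n P B" for B
  proof -
    have Bc: "B \<subseteq> tm_ground n P" "\<forall>i\<in>{1..n}. card (B \<inter> P i) = 1"
      using B basis_char[OF part_P disj_P] by auto
    have "\<forall>i\<in>{1..n}. \<exists>x. B \<inter> P i = {x}" using Bc(2) by (simp add: card_1_singleton_iff)
    then obtain a where a: "\<forall>i\<in>{1..n}. B \<inter> P i = {a i}" by metis
    have aP: "\<And>i. i \<in> {1..n} \<Longrightarrow> a i \<in> P i \<and> a i \<in> B" using a by blast
    obtain \<sigma>p where sp: "inj_on \<sigma>p {1..n-k}"
        "\<forall>r\<in>{1..n-k}. \<sigma>p r \<in> {k+1..n} \<and> (\<exists>b\<in>Q (\<sigma>p r). a (k+r) + b \<notin> E)"
    proof -
      have "\<forall>r\<in>{1..n-k}. r \<le> card {j\<in>{k+1..n}. \<exists>b\<in>Q j. a (k+r) + b \<notin> E}"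
      proof
        fix r assume r: "r \<in> {1..n-k}"
        then have "k + r \<in> {k+1..n}" by auto
        moreover then have "a (k+r) \<in> P (k+r)" using aP k by auto
        ultimately have "(k + r) - k \<le> card {j\<in>{k+1..n}. \<exists>b\<in>Q j. a (k+r) + b \<notin> E}"
          by (rule deg_pos)
        then show "r \<le> card {j\<in>{k+1..n}. \<exists>b\<in>Q j. a (k+r) + b \<notin> E}" by simp
      qed
      then show ?thesis using greedy[of "{k+1..n}" "n-k" "\<lambda>r j. \<exists>b\<in>Q j. a (k+r) + b \<notin> E"] that
        by auto
    qed
    obtain \<sigma>n where sn: "inj_on \<sigma>n {1..k-1}"
        "\<forall>r\<in>{1..k-1}. \<sigma>n r \<in> {1..k-1} \<and> (\<exists>b\<in>Q (\<sigma>n r). a (k-r) + b \<notin> E)"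
    proof -
      have "\<forall>r\<in>{1..k-1}. r \<le> card {j\<in>{1..k-1}. \<exists>b\<in>Q j. a (k-r) + b \<notin> E}"
      proof
        fix r assume r: "r \<in> {1..k-1}"
        then have "k - r \<in> {1..k-1}" by auto
        moreover then have "a (k-r) \<in> P (k-r)" using aP k by auto
        ultimately have h: "k - (k - r) \<le> card {j\<in>{1..k-1}. \<exists>b\<in>Q j. a (k-r) + b \<notin> E}"
          by (rule deg_neg)
        have "k - (k - r) = r" using r by auto
        then show "r \<le> card {j\<in>{1..k-1}. \<exists>b\<in>Q j. a (k-r) + b \<notin> E}" using h by simp
      qed
      then show ?thesis using greedy[of "{1..k-1}" "k-1" "\<lambda>r j. \<exists>b\<in>Q j. a (k-r) + b \<notin> E"] that
        by auto
    qed
    define \<sigma> where "\<sigma> i = (if i = k then k else if k < i then \<sigma>p (i - k) else \<sigma>n (k - i))" for i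
    have \<sigma>_prop: "\<forall>i\<in>{1..n}. \<sigma> i \<in> {1..n} \<and> (\<exists>b\<in>Q (\<sigma> i). a i + b \<notin> E)"
    proof
      fix i assume i: "i \<in> {1..n}"
      consider "i = k" | "k < i" | "i < k" by linarith
      then show "\<sigma> i \<in> {1..n} \<and> (\<exists>b\<in>Q (\<sigma> i). a i + b \<notin> E)"
      proof cases
        case 1
        have "a k \<in> P k" using aP k by blast
        then obtain q where q: "q \<in> Q k" "a k = - q" using c1b by auto
        have "a k + q = 0" using q by simp
        then have "a k + q \<notin> E" using nz by auto
        then have "\<exists>b\<in>Q k. a k + b \<notin> E" using q(1) by blast
        moreover have "\<sigma> i = k" "i = k" using 1 unfolding \<sigma>_def by auto
        ultimately show ?thesis using k by auto
      next
        case 2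
        then have r: "i - k \<in> {1..n-k}" and e: "k + (i - k) = i" using i by auto
        have si: "\<sigma> i = \<sigma>p (i - k)" using 2 by (simp add: \<sigma>_def)
        have h: "\<sigma>p (i-k) \<in> {k+1..n} \<and> (\<exists>b\<in>Q (\<sigma>p (i-k)). a (k + (i-k)) + b \<notin> E)"
          using sp(2) r by blast
        then show ?thesis unfolding si e by auto
      next
        case 3
        then have r: "k - i \<in> {1..k-1}" and e: "k - (k - i) = i" using i by auto
        have si: "\<sigma> i = \<sigma>n (k - i)" using 3 by (simp add: \<sigma>_def)
        have h: "\<sigma>n (k-i) \<in> {1..k-1} \<and> (\<exists>b\<in>Q (\<sigma>n (k-i)). a (k - (k-i)) + b \<notin> E)"
          using sn(2) r by blast
        then show ?thesis unfolding si e using k by auto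
      qed
    qed
    have \<sigma>_inj: "inj_on \<sigma> {1..n}"
    proof (rule inj_onI)
      fix x y assume x: "x \<in> {1..n}" and y: "y \<in> {1..n}" and e: "\<sigma> x = \<sigma> y"
      have rng: "\<And>i. i \<in> {1..n} \<Longrightarrow> (i = k \<and> \<sigma> i = k) \<or> (k < i \<and> \<sigma> i \<in> {k+1..n} \<and> \<sigma> i = \<sigma>p (i - k) \<and> i - k \<in> {1..n-k})
            \<or> (i < k \<and> \<sigma> i \<in> {1..k-1} \<and> \<sigma> i = \<sigma>n (k - i) \<and> k - i \<in> {1..k-1})"
      proof -
        fix i assume i: "i \<in> {1..n}"
        consider "i = k" | "k < i" | "i < k" by linarith
        then show "?thesis i"
        proof cases
          case 2
          then have "i - k \<in> {1..n-k}" using i by auto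
          then show ?thesis using sp(2) 2 unfolding \<sigma>_def by auto
        next
          case 3
          then have "k - i \<in> {1..k-1}" using i by auto
          then show ?thesis using sn(2) 3 unfolding \<sigma>_def by auto
        qed (auto simp: \<sigma>_def)
      qed
      have side: "(i = k \<longleftrightarrow> \<sigma> i = k) \<and> (k < i \<longleftrightarrow> k < \<sigma> i)" if i: "i \<in> {1..n}" for i
        using rng[OF i] by auto
      consider "x = k" | "k < x" | "x < k" by linarith
      then show "x = y"
      proof cases
        case 1
        then show ?thesis using side[OF x] side[OF y] e by auto
      next
        case 2
        then have "k < y" using side[OF x] side[OF y] e by auto
        then have "\<sigma> x = \<sigma>p (x - k)" "\<sigma> y = \<sigma>p (y - k)" "x - k \<in> {1..n-k}" "y - k \<in> {1..n-k}"
          using rng[OF x] rng[OF y] 2 by auto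
        then have "x - k = y - k" using sp(1) e unfolding inj_on_def by metis
        then show "x = y" using 2 \<open>k < y\<close> by arith
      next
        case 3
        have "\<sigma> x \<noteq> k" "\<not> k < \<sigma> x" using side[OF x] 3 by auto
        then have "\<sigma> y \<noteq> k" "\<not> k < \<sigma> y" using e by auto
        then have "y \<noteq> k" "\<not> k < y" using side[OF y] by auto
        then have "y < k" by linarith
        then have "\<sigma> x = \<sigma>n (k - x)" "\<sigma> y = \<sigma>n (k - y)" "k - x \<in> {1..k-1}" "k - y \<in> {1..k-1}"
          using rng[OF x] rng[OF y] 3 by auto
        then have "k - x = k - y" using sn(1) e unfolding inj_on_def by metis
        then show "x = y" using 3 \<open>y < k\<close> by arith
      qed
    qed
    have \<sigma>_sub: "\<sigma> ` {1..n} \<subseteq> {1..n}" using \<sigma>_prop by auto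
    have \<sigma>_surj: "\<sigma> ` {1..n} = {1..n}"
      by (rule endo_inj_surj[OF _ \<sigma>_sub \<sigma>_inj]) simp
    from \<sigma>_prop obtain b where b: "\<forall>i\<in>{1..n}. b i \<in> Q (\<sigma> i) \<and> a i + b i \<notin> E"
      by metis
    have bQ: "\<And>i. i \<in> {1..n} \<Longrightarrow> b i \<in> Q (\<sigma> i)" using b by blast
    have \<sigma>n: "\<And>i. i \<in> {1..n} \<Longrightarrow> \<sigma> i \<in> {1..n}" using \<sigma>_prop by blast
    have b_inj: "\<And>i j. i \<in> {1..n} \<Longrightarrow> j \<in> {1..n} \<Longrightarrow> b i = b j \<Longrightarrow> i = j"
    proof -
      fix i j assume i: "i \<in> {1..n}" and j: "j \<in> {1..n}" and e: "b i = b j"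
      have "\<sigma> i = \<sigma> j" using disjQ[OF \<sigma>n[OF i] \<sigma>n[OF j] bQ[OF i]] bQ[OF j] e by simp
      then show "i = j" using \<sigma>_inj i j unfolding inj_on_def by blast
    qed
    have B_eq: "B = a ` {1..n}"
    proof
      show "B \<subseteq> a ` {1..n}"
      proof
        fix x assume x: "x \<in> B"
        then obtain i where i: "i \<in> {1..n}" "x \<in> P i" using Bc(1) unfolding tm_ground_def by auto
        then have "x = a i" using a x by blast
        then show "x \<in> a ` {1..n}" using i by auto
      qed
    qed (use aP in auto)
    define f where "f x = b (SOME i. i \<in> {1..n} \<and> x \<in> P i)" for x
    have f_a: "\<And>i. i \<in> {1..n} \<Longrightarrow> f (a i) = b i"
    proof -
      fix i assume i: "i \<in> {1..n}"
      have ex: "\<exists>i'. i' \<in> {1..n} \<and> a i \<in> P i'" using i aP by blast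
      define i' where "i' = (SOME i'. i' \<in> {1..n} \<and> a i \<in> P i')"
      have "i' \<in> {1..n} \<and> a i \<in> P i'" unfolding i'_def by (rule someI_ex[OF ex])
      then have "i' = i" using disjP i aP by blast
      then show "f (a i) = b i" unfolding f_def i'_def by simp
    qed
    define B' where "B' = b ` {1..n}"
    have bij: "bij_betw f B B'"
      unfolding bij_betw_def
    proof
      show "inj_on f B"
      proof (rule inj_onI)
        fix x y assume "x \<in> B" "y \<in> B" and e: "f x = f y"
        then obtain i j where i: "i \<in> {1..n}" "x = a i" and j: "j \<in> {1..n}" "y = a j"
          using B_eq by auto
        then have "b i = b j" using e f_a by simp
        then have "i = j" using b_inj i j by blast
        then show "x = y" using i j by simp
      qed
    next
      show "f ` B = B'" unfolding B_eq B'_def image_image using f_a by (auto intro: image_cong)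
    qed
    have match: "\<forall>x\<in>B. x + f x \<notin> tm_ground n P"
    proof
      fix x assume "x \<in> B"
      then obtain i where i: "i \<in> {1..n}" "x = a i" using B_eq by auto
      then show "x + f x \<notin> tm_ground n P" using b f_a unfolding E_def by auto
    qed
    have basis: "tm_basis n Q B'"
    proof -
      have "B' \<subseteq> tm_ground n Q" unfolding B'_def tm_ground_def using bQ \<sigma>n by blast
      moreover have "card (B' \<inter> Q j) = 1" if j: "j \<in> {1..n}" for j
      proof -
        obtain i0 where i0: "i0 \<in> {1..n}" "\<sigma> i0 = j" using \<sigma>_surj j by (metis imageE)
        have "B' \<inter> Q j = {b i0}"
        proof
          show "B' \<inter> Q j \<subseteq> {b i0}"
          proof
            fix y assume "y \<in> B' \<inter> Q j"
            then obtain i where i: "i \<in> {1..n}" "y = b i" "b i \<in> Q j" unfolding B'_def by auto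
            have "\<sigma> i = j" using disjQ[OF \<sigma>n[OF i(1)] j bQ[OF i(1)] i(3)] .
            then have "i = i0" using \<sigma>_inj i0 i unfolding inj_on_def by metis
            then show "y \<in> {b i0}" using i by simp
          qed
        next
          show "{b i0} \<subseteq> B' \<inter> Q j" using i0 bQ unfolding B'_def by auto
        qed
        then show ?thesis by simp
      qed
      ultimately show ?thesis using basis_char[OF part_Q disj_Q] by blast
    qed
    show ?thesis using basis bij match by blast
  qed
  show ?thesis unfolding tm_matched_def using rP rQ n0 main by auto
qed

end
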